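(* Let $l\in\mathbb{Z}_{\ge1}$ and let $X=X(\mathbb{Z}_{2l},\{\pm a,\pm b\})$ be a $4$-regular circulant graph. If $X$ admits perfect state transfer, then $\frac{\zeta_{2l}^a+\zeta_{2l}^{-a}+\zeta_{2l}^b+\zeta_{2l}^{-b}}{2}$ is an algebraic integer, where $\zeta_{2l}=e^{\frac{2\pi}{2l}i}$.
   Context: $X(\mathbb{Z}_n,S)$ (with $S\subseteq\mathbb{Z}_n\setminus\{0\}$, $S=-S$) has vertex set $\mathbb{Z}_n$ and edges $\{x,y\}$ with $y-x\in S$. For a graph with symmetric arc set $\mathcal{A}$ ($t((x,y))=y$, $(x,y)^{-1}=(y,x)$): boundary matrix $d_{x,a}=\frac{1}{\sqrt{\deg x}}\delta_{x,t(a)}$, shift matrix $R_{a,b}=\delta_{a,b^{-1}}$, $U=R(2d^*d-I_{\mathcal{A}})$. A graph admits perfect state transfer if there are distinct vertices $x,y$, $\tau\in\mathbb{Z}_{\ge1}$ and $|\gamma|=1$ with $U^\tau d^*e_x=\gamma d^*e_y$ ($e_x$ the standard unit vector). *)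

theory Defs
  imports Complex_Main "HOL-Computational_Algebra.Polynomial"
begin

text \<open>A (simple, undirected) graph is given by a finite vertex set V and a symmetric
adjacency relation adj. Vectors indexed by vertices / arcs are functions to complex.\<close>

definition arcs :: "'v set \<Rightarrow> ('v \<Rightarrow> 'v \<Rightarrow> bool) \<Rightarrow> ('v \<times> 'v) set" where
  "arcs V adj = {(x, y). x \<in> V \<and> y \<in> V \<and> adj x y}"

definition gdeg :: "'v set \<Rightarrow> ('v \<Rightarrow> 'v \<Rightarrow> bool) \<Rightarrow> 'v \<Rightarrow> nat" where
  "gdeg V adj x = card {y \<in> V. adj x y}"

definition bdry :: "'v set \<Rightarrow> ('v \<Rightarrow> 'v \<Rightarrow> bool) \<Rightarrow> 'v \<Rightarrow> 'v \<times> 'v \<Rightarrow> complex" where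
  "bdry V adj x a = (if x = snd a then complex_of_real (1 / sqrt (real (gdeg V adj x))) else 0)"

definition d_mult :: "'v set \<Rightarrow> ('v \<Rightarrow> 'v \<Rightarrow> bool) \<Rightarrow> ('v \<times> 'v \<Rightarrow> complex) \<Rightarrow> 'v \<Rightarrow> complex" where
  "d_mult V adj f x = (\<Sum>a\<in>arcs V adj. bdry V adj x a * f a)"

definition dstar_mult :: "'v set \<Rightarrow> ('v \<Rightarrow> 'v \<Rightarrow> bool) \<Rightarrow> ('v \<Rightarrow> complex) \<Rightarrow> 'v \<times> 'v \<Rightarrow> complex" where
  "dstar_mult V adj g a = (\<Sum>x\<in>V. cnj (bdry V adj x a) * g x)"

definition shift_mult :: "'v set \<Rightarrow> ('v \<Rightarrow> 'v \<Rightarrow> bool) \<Rightarrow> ('v \<times> 'v \<Rightarrow> complex) \<Rightarrow> 'v \<times> 'v \<Rightarrow> complex" where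
  "shift_mult V adj f a = (\<Sum>b\<in>arcs V adj. (if a = (snd b, fst b) then 1 else 0) * f b)"

definition walk_U :: "'v set \<Rightarrow> ('v \<Rightarrow> 'v \<Rightarrow> bool) \<Rightarrow> ('v \<times> 'v \<Rightarrow> complex) \<Rightarrow> 'v \<times> 'v \<Rightarrow> complex" where
  "walk_U V adj f = shift_mult V adj (\<lambda>a. 2 * dstar_mult V adj (d_mult V adj f) a - f a)"

definition unit_vec :: "'v \<Rightarrow> 'v \<Rightarrow> complex" where
  "unit_vec x = (\<lambda>y. if y = x then 1 else 0)"

text \<open>Perfect state transfer; vectors on arcs are compared on the arc set.\<close>
definition has_PST :: "'v set \<Rightarrow> ('v \<Rightarrow> 'v \<Rightarrow> bool) \<Rightarrow> bool" where
  "has_PST V adj \<longleftrightarrow> (\<exists>x\<in>V. \<exists>y\<in>V. \<exists>(\<tau>::nat) (\<gamma>::complex). x \<noteq> y \<and> \<tau> \<ge> 1 \<and> norm \<gamma> = 1 \<and>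
     (\<forall>a\<in>arcs V adj. (walk_U V adj ^^ \<tau>) (dstar_mult V adj (unit_vec x)) a
                      = \<gamma> * dstar_mult V adj (unit_vec y) a))"

text \<open>Circulant graph X(Z_n, S): vertices 0..n-1 (representatives of Z_n),
 x ~ y iff (y - x) mod n \<in> S, where S is a set of residues in {0..n-1}.\<close>
definition circ_V :: "nat \<Rightarrow> int set" where
  "circ_V n = {0..<int n}"

definition circ_adj :: "nat \<Rightarrow> int set \<Rightarrow> int \<Rightarrow> int \<Rightarrow> bool" where
  "circ_adj n S x y \<longleftrightarrow> (y - x) mod int n \<in> S"

end

theory Submission
  imports Defs
begin


fun cheb :: "nat \<Rightarrow> complex poly" where
  "cheb 0 = [:2:]"
| "cheb (Suc 0) = [:0,1:]"
| "cheb (Suc (Suc m)) = pCons 0 (cheb (Suc m)) - cheb m"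

lemma cheb_int: "\<forall>i. coeff (cheb m) i \<in> \<int>"
proof (induction m rule: cheb.induct)
  case 1 then show ?case by (auto simp: coeff_pCons split: nat.splits)
next
  case 2 then show ?case by (auto simp: coeff_pCons split: nat.splits)
next
  case (3 m)
  show ?case
  proof
    fix i
    have "coeff (pCons 0 (cheb (Suc m))) i \<in> \<int>" using 3 by (auto simp: coeff_pCons split: nat.splits)
    then show "coeff (cheb (Suc (Suc m))) i \<in> \<int>" using 3 by (simp add: Ints_diff)
  qed
qed

lemma cheb_deg: "degree (cheb m) = m \<and> (m \<ge> 1 \<longrightarrow> coeff (cheb m) m = 1)"
proof (induction m rule: cheb.induct)
  case 1 then show ?case by simp
next
  case 2 then show ?case by simp
next
  case (3 m)
  have ne: "cheb (Suc m) \<noteq> 0" using 3 by (metis One_nat_def Suc_le_mono le0 zero_neq_one coeff_0)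
  have d1: "degree (pCons 0 (cheb (Suc m))) = Suc (Suc m)" using 3 ne by simp
  have "degree (cheb m) < degree (pCons 0 (cheb (Suc m)))" using 3 d1 by simp
  then have "degree (pCons 0 (cheb (Suc m)) - cheb m) = Suc (Suc m)"
    using d1 degree_add_eq_left[of "- cheb m" "pCons 0 (cheb (Suc m))"] by simp
  moreover have "coeff (pCons 0 (cheb (Suc m)) - cheb m) (Suc (Suc m)) = 1"
    using 3 by (simp add: coeff_eq_0)
  ultimately show ?case by simp
qed

lemma cheb_poly: "w \<noteq> 0 \<Longrightarrow> poly (cheb m) (w + inverse w) = w^m + inverse w ^ m"
proof (induction m rule: cheb.induct)
  case 1 then show ?case by simp
next
  case 2 then show ?case by simp
next
  case (3 m)
  then show ?case by (simp add: field_simps power_Suc)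
qed

lemma alg_int_unit_root:
  fixes w :: complex
  assumes "w ^ m = 1" "m > 0"
  shows "algebraic_int (w + inverse w)"
proof -
  have w0: "w \<noteq> 0" using assms by (metis power_0_left zero_neq_one gr_implies_not0)
  have "inverse w ^ m = 1" using assms by (simp add: power_inverse)
  then have p: "poly (cheb m) (w + inverse w) = 2" using cheb_poly[OF w0, of m] assms by simp
  show ?thesis
    by (rule algebraic_int_root[where y=2 and p="cheb m"]) (use p cheb_int[of m] cheb_deg[of m] assms in auto)
qed



locale circ =
  fixes n :: nat and S :: "int set"
  assumes npos: "n > 0"
    and Ssub: "S \<subseteq> {0..<int n}"
    and Ssym: "\<And>s. s \<in> S \<Longrightarrow> (-s) mod int n \<in> S"
    and Scard: "card S = 4"
begin

abbreviation "V \<equiv> circ_V n"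
abbreviation "adj \<equiv> circ_adj n S"
abbreviation "A \<equiv> arcs V adj"
definition nbrs where "nbrs x = {y \<in> V. adj x y}"

lemma finS: "finite S" using Scard by (metis card.infinite zero_neq_numeral)

lemma adj_sym: "adj u v \<longleftrightarrow> adj v u"
proof -
  have *: "adj v u" if "adj u v" for u v
  proof -
    have "(-((v - u) mod int n)) mod int n \<in> S" using that Ssym by (simp add: circ_adj_def)
    then show ?thesis by (simp add: circ_adj_def mod_minus_eq)
  qed
  show ?thesis using * by blast
qed

lemma finV[simp]: "finite V" by (simp add: circ_V_def)

lemma finA: "finite A"
proof -
  have "A \<subseteq> V \<times> V" by (auto simp: arcs_def)
  then show ?thesis by (rule finite_subset) (simp add: circ_V_def)
qed

lemma nbr_sum: "(\<Sum>y\<in>nbrs x. f y) = (\<Sum>s\<in>S. f ((x+s) mod int n))"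
proof (rule sum.reindex_bij_witness[symmetric, where j="\<lambda>s. (x+s) mod int n" and i="\<lambda>y. (y - x) mod int n"])
  fix s assume s: "s \<in> S"
  then have s0: "0 \<le> s" "s < int n" using Ssub by auto
  show "((x + s) mod int n - x) mod int n = s"
    using s0 by (simp add: mod_diff_left_eq)
  show "(x + s) mod int n \<in> nbrs x"
    using s s0 npos by (simp add: nbrs_def circ_V_def circ_adj_def mod_diff_left_eq)
next
  fix y assume y: "y \<in> nbrs x"
  then have y0: "0 \<le> y" "y < int n" by (auto simp: nbrs_def circ_V_def)
  show "(x + (y - x) mod int n) mod int n = y"
    using y0 by (simp add: mod_add_right_eq)
  show "(y - x) mod int n \<in> S" using y by (simp add: nbrs_def circ_adj_def)
qed simp

lemma card_nbrs: "card (nbrs x) = 4"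
  using nbr_sum[where x=x and f="\<lambda>_. 1::nat"] Scard by simp

lemma gdeg4: "gdeg V adj x = 4"
  using card_nbrs by (simp add: gdeg_def nbrs_def)

lemma bdry_eq: "bdry V adj x a = (if x = snd a then 1/2 else 0)"
proof -
  have "sqrt 4 = (2::real)" by (simp add: real_sqrt_unique)
  then show ?thesis by (simp add: bdry_def gdeg4)
qed

lemma finN[simp]: "finite (nbrs x)" by (simp add: nbrs_def)

lemma A_Sigma: "A = Sigma V nbrs"
  by (auto simp: arcs_def nbrs_def)

lemma sum_A: "(\<Sum>a\<in>A. F a) = (\<Sum>u\<in>V. \<Sum>v\<in>nbrs u. F (u,v))"
  unfolding A_Sigma by (subst sum.Sigma) (auto simp: split_def)

lemma swap_mem: "(u,v) \<in> A \<Longrightarrow> (v,u) \<in> A"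
  using adj_sym by (auto simp: arcs_def)

lemma sum_A_swap: "(\<Sum>a\<in>A. F a) = (\<Sum>a\<in>A. F (snd a, fst a))"
  by (rule sum.reindex_bij_witness[where i="\<lambda>a. (snd a, fst a)" and j="\<lambda>a. (snd a, fst a)"])
     (auto intro: swap_mem)

lemma sum_A_swap2: "(\<Sum>a\<in>A. F (fst a) (snd a)) = (\<Sum>a\<in>A. F (snd a) (fst a))"
  using sum_A_swap[of "\<lambda>a. F (fst a) (snd a)"] by simp

lemma sum_A2: "(\<Sum>a\<in>A. F (fst a) (snd a)) = (\<Sum>u\<in>V. \<Sum>v\<in>nbrs u. F u v)"
  by (simp add: sum_A)

lemma arcV: "a \<in> A \<Longrightarrow> fst a \<in> V \<and> snd a \<in> V"
  by (auto simp: arcs_def)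

lemma dstar_eq: "b \<in> A \<Longrightarrow> dstar_mult V adj F b = F (snd b) / 2"
proof -
  assume b: "b \<in> A"
  have "dstar_mult V adj F b = (\<Sum>x\<in>V. if x = snd b then F x / 2 else 0)"
    unfolding dstar_mult_def bdry_eq by (rule sum.cong) auto
  also have "\<dots> = F (snd b) / 2" using arcV[OF b] by (simp add: sum.delta' circ_V_def)
  finally show ?thesis .
qed

lemma U_eq: "a \<in> A \<Longrightarrow> walk_U V adj g a = d_mult V adj g (fst a) - g (snd a, fst a)"
proof -
  assume a: "a \<in> A"
  obtain u v where uv: "a = (u,v)" by force
  have m: "(v,u) \<in> A" using a uv swap_mem by simp
  have "walk_U V adj g a = (\<Sum>b\<in>A. if b = (v,u) then 2 * dstar_mult V adj (d_mult V adj g) b - g b else 0)"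
    unfolding walk_U_def shift_mult_def uv by (rule sum.cong) auto
  also have "\<dots> = 2 * dstar_mult V adj (d_mult V adj g) (v,u) - g (v,u)"
    using m finA by (simp add: sum.delta')
  also have "\<dots> = d_mult V adj g u - g (v,u)" using dstar_eq[OF m, of "d_mult V adj g"] by (simp add: mult.commute)
  finally show ?thesis using uv by simp
qed

definition ch :: "int \<Rightarrow> complex" where "ch z = cis (2*pi*of_int z / real n)"

lemma ch_add: "ch (x + y) = ch x * ch y"
  by (simp add: ch_def cis_mult add_divide_distrib distrib_left)

lemma ch_mod: "ch (z mod int n) = ch z"
proof -
  have "z = int n * (z div int n) + z mod int n" by simp
  then have "ch z = ch (int n * (z div int n)) * ch (z mod int n)" by (metis ch_add)
  moreover have "ch (int n * (z div int n)) = 1"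
  proof -
    have "2*pi*of_int (int n * (z div int n)) / real n = 2*pi*of_int (z div int n)"
      using npos by (simp add: field_simps)
    then show ?thesis unfolding ch_def by (simp add: cis_multiple_2pi)
  qed
  ultimately show ?thesis by simp
qed

lemma ch_minus_mod: "ch (- (z mod int n)) = ch (- z)"
  by (metis ch_mod mod_minus_eq)

lemma norm_ch: "norm (ch z) = 1" by (simp add: ch_def)

definition phi :: "(int \<times> int \<Rightarrow> complex) \<Rightarrow> complex" where
  "phi g = (\<Sum>a\<in>A. ch (- snd a) * g a)"
definition psi :: "(int \<times> int \<Rightarrow> complex) \<Rightarrow> complex" where
  "psi g = (\<Sum>a\<in>A. ch (- fst a) * g a)"
definition sig :: complex where "sig = (\<Sum>s\<in>S. ch (- s))"

lemma nbr_ch: "(\<Sum>v\<in>nbrs u. ch (- v)) = ch (- u) * sig"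
proof -
  have "(\<Sum>v\<in>nbrs u. ch (- v)) = (\<Sum>s\<in>S. ch (- ((u+s) mod int n)))" by (rule nbr_sum)
  also have "\<dots> = (\<Sum>s\<in>S. ch (- u) * ch (- s))"
    by (rule sum.cong) (auto simp: ch_minus_mod ch_add[symmetric])
  finally show ?thesis by (simp add: sig_def sum_distrib_left)
qed

lemma dsum: "(\<Sum>u\<in>V. ch (- u) * d_mult V adj g u) = phi g / 2"
proof -
  have "(\<Sum>u\<in>V. ch (- u) * d_mult V adj g u)
      = (\<Sum>u\<in>V. \<Sum>c\<in>A. if u = snd c then ch (- snd c) / 2 * g c else 0)"
    unfolding d_mult_def bdry_eq sum_distrib_left by (intro sum.cong) auto
  also have "\<dots> = (\<Sum>c\<in>A. \<Sum>u\<in>V. if u = snd c then ch (- snd c) / 2 * g c else 0)"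
    by (rule sum.swap)
  also have "\<dots> = (\<Sum>c\<in>A. ch (- snd c) / 2 * g c)"
    by (rule sum.cong[OF refl]) (use arcV in \<open>auto simp: sum.delta\<close>)
  also have "\<dots> = phi g / 2" by (simp add: phi_def sum_divide_distrib)
  finally show ?thesis .
qed

lemma phi_U: "phi (walk_U V adj g) = sig / 2 * phi g - psi g"
proof -
  have "phi (walk_U V adj g) = (\<Sum>a\<in>A. ch (- snd a) * d_mult V adj g (fst a))
          - (\<Sum>a\<in>A. ch (- snd a) * g (snd a, fst a))"
    unfolding phi_def sum_subtractf[symmetric] by (rule sum.cong[OF refl]) (auto simp: U_eq algebra_simps)
  also have "(\<Sum>a\<in>A. ch (- snd a) * g (snd a, fst a)) = psi g"
    unfolding psi_def by (subst sum_A_swap) simp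
  also have "(\<Sum>a\<in>A. ch (- snd a) * d_mult V adj g (fst a))
      = (\<Sum>u\<in>V. (\<Sum>v\<in>nbrs u. ch (- v)) * d_mult V adj g u)"
    by (simp add: sum_A sum_distrib_right)
  also have "\<dots> = sig * (\<Sum>u\<in>V. ch (- u) * d_mult V adj g u)"
    by (simp add: nbr_ch sum_distrib_left algebra_simps)
  also have "\<dots> = sig / 2 * phi g" by (simp add: dsum)
  finally show ?thesis .
qed

lemma psi_U: "psi (walk_U V adj g) = phi g"
proof -
  have "psi (walk_U V adj g) = (\<Sum>a\<in>A. ch (- fst a) * d_mult V adj g (fst a))
          - (\<Sum>a\<in>A. ch (- fst a) * g (snd a, fst a))"
    unfolding psi_def sum_subtractf[symmetric] by (rule sum.cong[OF refl]) (auto simp: U_eq algebra_simps)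
  also have "(\<Sum>a\<in>A. ch (- fst a) * g (snd a, fst a)) = phi g"
    unfolding phi_def by (subst sum_A_swap) simp
  also have "(\<Sum>a\<in>A. ch (- fst a) * d_mult V adj g (fst a))
      = (\<Sum>u\<in>V. of_nat (card (nbrs u)) * (ch (- u) * d_mult V adj g u))"
    by (simp add: sum_A)
  also have "\<dots> = 4 * (\<Sum>u\<in>V. ch (- u) * d_mult V adj g u)"
    by (simp add: card_nbrs sum_distrib_left)
  also have "\<dots> = 2 * phi g" by (simp add: dsum)
  finally show ?thesis by simp
qed

lemma g0_eq: "x \<in> V \<Longrightarrow> b \<in> A \<Longrightarrow> dstar_mult V adj (unit_vec x) b = (if snd b = x then 1/2 else 0)"
  by (simp add: dstar_eq unit_vec_def)

lemma phi_g0: "x \<in> V \<Longrightarrow> phi (dstar_mult V adj (unit_vec x)) = 2 * ch (- x)"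
proof -
  assume x: "x \<in> V"
  have "phi (dstar_mult V adj (unit_vec x)) = (\<Sum>a\<in>A. if snd a = x then ch (- x) / 2 else 0)"
    unfolding phi_def by (rule sum.cong) (auto simp: g0_eq x)
  also have "\<dots> = (\<Sum>a\<in>A. if fst a = x then ch (- x) / 2 else 0)"
    using sum_A_swap2[of "\<lambda>u v. if v = x then ch (- x) / 2 else 0"] by simp
  also have "\<dots> = (\<Sum>u\<in>V. 4 * (if u = x then ch (- x) / 2 else 0))"
    by (simp add: sum_A card_nbrs)
  also have "\<dots> = 4 * (ch (- x) / 2)" using x by (simp add: sum_distrib_left[symmetric] sum.delta')
  also have "\<dots> = 2 * ch (- x)" by simp
  finally show ?thesis .
qed

lemma psi_g0: "x \<in> V \<Longrightarrow> psi (dstar_mult V adj (unit_vec x)) = sig / 2 * ch (- x)"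
proof -
  assume x: "x \<in> V"
  have "psi (dstar_mult V adj (unit_vec x)) = (\<Sum>a\<in>A. if snd a = x then ch (- fst a) / 2 else 0)"
    unfolding psi_def by (rule sum.cong) (auto simp: g0_eq x)
  also have "\<dots> = (\<Sum>a\<in>A. if fst a = x then ch (- snd a) / 2 else 0)"
    using sum_A_swap2[of "\<lambda>u v. if v = x then ch (- u) / 2 else 0"] by simp
  also have "\<dots> = (\<Sum>u\<in>V. \<Sum>v\<in>nbrs u. if u = x then ch (- v) / 2 else 0)"
    using sum_A2[of "\<lambda>u v. if u = x then ch (- v) / 2 else 0"] by simp
  also have "\<dots> = (\<Sum>u\<in>V. if u = x then (\<Sum>v\<in>nbrs u. ch (- v) / 2) else 0)"
    by (rule sum.cong) auto
  also have "\<dots> = (\<Sum>v\<in>nbrs x. ch (- v) / 2)" using x by (simp add: sum.delta')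
  also have "\<dots> = sig / 2 * ch (- x)" by (simp add: sum_divide_distrib[symmetric] nbr_ch)
  finally show ?thesis .
qed

end



lemma cis_pm: "cis t + cis (- t) = complex_of_real (2 * cos t)"
  by (simp add: complex_eq_iff)

lemma card4_distinct: "card {p, q, r, s} = 4 \<Longrightarrow> p \<noteq> q \<and> p \<noteq> r \<and> p \<noteq> s \<and> q \<noteq> r \<and> q \<noteq> s \<and> r \<noteq> s"
  by (auto simp: card_insert_if split: if_splits)

theorem lemma9p2:
  fixes l :: nat and a b :: int
  defines "S \<equiv> {a mod int (2*l), (-a) mod int (2*l), b mod int (2*l), (-b) mod int (2*l)}"
  assumes "l \<ge> 1"
    and "0 \<notin> S"
    and "card S = 4"
    and "has_PST (circ_V (2*l)) (circ_adj (2*l) S)"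
  shows "algebraic_int ((cis (2*pi*a/(2*l)) + cis (2*pi*(-a)/(2*l))
                        + cis (2*pi*b/(2*l)) + cis (2*pi*(-b)/(2*l))) / 2)"
proof -
  let ?N = "int (2*l)"
  have Npos: "?N > 0" using assms(2) by simp
  have Ssub: "S \<subseteq> {0..<?N}" unfolding S_def using Npos by auto
  have Ssym: "(-s) mod ?N \<in> S" if "s \<in> S" for s
    using that unfolding S_def by (auto simp: mod_minus_eq)
  interpret C: circ "2*l" S
    by unfold_locales (use assms(2,4) Ssub Ssym in auto)
  obtain x y \<tau> \<gamma> where xV: "x \<in> C.V" and yV: "y \<in> C.V" and tau: "\<tau> \<ge> 1" and gam: "norm \<gamma> = 1"
    and pst: "\<forall>a\<in>C.A. (walk_U C.V C.adj ^^ \<tau>) (dstar_mult C.V C.adj (unit_vec x)) a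
                      = \<gamma> * dstar_mult C.V C.adj (unit_vec y) a"
    using assms(5) unfolding has_PST_def by blast
  define \<alpha> where "\<alpha> = 2*pi*of_int a / real (2*l)"
  define \<beta> where "\<beta> = 2*pi*of_int b / real (2*l)"
  have cha: "C.ch a = cis \<alpha>" "C.ch (-a) = cis (-\<alpha>)" "C.ch b = cis \<beta>" "C.ch (-b) = cis (-\<beta>)"
    by (simp_all add: C.ch_def \<alpha>_def \<beta>_def)
  have dist: "a mod ?N \<noteq> (-a) mod ?N \<and> a mod ?N \<noteq> b mod ?N \<and> a mod ?N \<noteq> (-b) mod ?N \<and>
      (-a) mod ?N \<noteq> b mod ?N \<and> (-a) mod ?N \<noteq> (-b) mod ?N \<and> b mod ?N \<noteq> (-b) mod ?N"
    using assms(4) unfolding S_def by (rule card4_distinct)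
  have "C.sig = (\<Sum>s\<in>S. C.ch (- s))" by (rule C.sig_def)
  also have "\<dots> = C.ch (- (a mod ?N)) + C.ch (- ((-a) mod ?N)) + C.ch (- (b mod ?N)) + C.ch (- ((-b) mod ?N))"
    unfolding S_def using dist by (simp add: add.assoc)
  also have "\<dots> = C.ch (-a) + C.ch a + C.ch (-b) + C.ch b"
    by (simp only: C.ch_minus_mod minus_minus)
  also have "\<dots> = complex_of_real (2 * cos \<alpha> + 2 * cos \<beta>)"
    unfolding cha using cis_pm[of \<alpha>] cis_pm[of \<beta>] by (simp add: algebra_simps)
  finally have sig1: "C.sig = complex_of_real (2 * cos \<alpha> + 2 * cos \<beta>)" .
  have target: "(cis (2*pi*a/(2*l)) + cis (2*pi*(-a)/(2*l))
                        + cis (2*pi*b/(2*l)) + cis (2*pi*(-b)/(2*l))) / 2 = C.sig / 2"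
  proof -
    have "(cis (2*pi*a/(2*l)) + cis (2*pi*(-a)/(2*l))
                        + cis (2*pi*b/(2*l)) + cis (2*pi*(-b)/(2*l))) = C.ch a + C.ch (-a) + C.ch b + C.ch (-b)"
      by (simp add: C.ch_def)
    also have "\<dots> = (cis \<alpha> + cis (-\<alpha>)) + (cis \<beta> + cis (-\<beta>))" by (simp only: cha add.assoc)
    also have "\<dots> = C.sig" unfolding cis_pm sig1 by simp
    finally show ?thesis by simp
  qed
  define lam where "lam = (cos \<alpha> + cos \<beta>) / 2"
  have lam1: "-1 \<le> lam"
  proof -
    have "-2 \<le> cos \<alpha> + cos \<beta>" using add_mono[OF cos_ge_minus_one[of \<alpha>] cos_ge_minus_one[of \<beta>]] by simp
    then show ?thesis unfolding lam_def by (simp add: field_simps)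
  qed
  have lam2: "lam \<le> 1"
  proof -
    have "cos \<alpha> + cos \<beta> \<le> 2" using add_mono[OF cos_le_one[of \<alpha>] cos_le_one[of \<beta>]] by simp
    then show ?thesis unfolding lam_def by (simp add: field_simps)
  qed
  note lam = lam1 lam2
  define \<theta> where "\<theta> = arccos lam"
  have cth: "cos \<theta> = lam" unfolding \<theta>_def using lam by (simp add: cos_arccos)
  have sig2: "C.sig / 2 = complex_of_real (2 * cos \<theta>)" unfolding sig1 cth lam_def by simp
  define g where "g t = (walk_U C.V C.adj ^^ t) (dstar_mult C.V C.adj (unit_vec x))" for t
  define c where "c = C.ch (- x)"
  have trig: "cos (real (Suc t) * \<theta>) = 2 * cos \<theta> * cos (real t * \<theta>) - cos (real t * \<theta> - \<theta>)" for t
  proof -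
    have "real (Suc t) * \<theta> = real t * \<theta> + \<theta>" by (simp add: algebra_simps)
    then show ?thesis by (simp add: cos_add cos_diff)
  qed
  have it: "C.phi (g t) = 2 * c * complex_of_real (cos (real t * \<theta>)) \<and>
            C.psi (g t) = 2 * c * complex_of_real (cos (real t * \<theta> - \<theta>))" for t
  proof (induction t)
    case 0
    show ?case using C.phi_g0[OF xV] C.psi_g0[OF xV] sig2 unfolding g_def c_def by simp
  next
    case (Suc t)
    have gs: "g (Suc t) = walk_U C.V C.adj (g t)" unfolding g_def by simp
    have "C.phi (g (Suc t)) = C.sig / 2 * C.phi (g t) - C.psi (g t)" unfolding gs by (rule C.phi_U)
    also have "\<dots> = 2 * c * complex_of_real (2 * cos \<theta> * cos (real t * \<theta>) - cos (real t * \<theta> - \<theta>))"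
      using Suc sig2 by (simp add: algebra_simps)
    also have "\<dots> = 2 * c * complex_of_real (cos (real (Suc t) * \<theta>))" by (simp only: trig)
    finally have 1: "C.phi (g (Suc t)) = 2 * c * complex_of_real (cos (real (Suc t) * \<theta>))" .
    have "C.psi (g (Suc t)) = C.phi (g t)" unfolding gs by (rule C.psi_U)
    also have "\<dots> = 2 * c * complex_of_real (cos (real (Suc t) * \<theta> - \<theta>))"
      using Suc by (simp add: algebra_simps)
    finally show ?case using 1 by simp
  qed
  have "C.phi (g \<tau>) = \<gamma> * C.phi (dstar_mult C.V C.adj (unit_vec y))"
    unfolding C.phi_def sum_distrib_left
    by (rule sum.cong[OF refl]) (use pst in \<open>simp add: g_def algebra_simps\<close>)
  then have eq: "2 * c * complex_of_real (cos (real \<tau> * \<theta>)) = \<gamma> * (2 * C.ch (- y))"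
    using it[of \<tau>] C.phi_g0[OF yV] by simp
  have "norm (2 * c * complex_of_real (cos (real \<tau> * \<theta>))) = 2 * \<bar>cos (real \<tau> * \<theta>)\<bar>"
    unfolding c_def by (simp add: norm_mult C.norm_ch)
  moreover have "norm (\<gamma> * (2 * C.ch (- y))) = 2" by (simp add: norm_mult gam C.norm_ch)
  ultimately have "\<bar>cos (real \<tau> * \<theta>)\<bar> = 1" using eq by simp
  then have "(sin (real \<tau> * \<theta>))^2 = 0" using sin_cos_squared_add[of "real \<tau> * \<theta>"]
    by (simp add: abs_if power2_eq_square split: if_splits)
  then have "sin (real \<tau> * \<theta>) = 0" by simp
  then obtain i :: int where i: "real \<tau> * \<theta> = of_int i * pi" using sin_zero_iff_int2 by blast
  define w where "w = cis \<theta>"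
  have "w ^ (2*\<tau>) = cis (2 * pi * of_int i)"
  proof -
    have "real (2*\<tau>) * \<theta> = 2 * (real \<tau> * \<theta>)" by simp
    also have "\<dots> = 2 * pi * of_int i" using i by simp
    finally show ?thesis by (simp only: w_def DeMoivre)
  qed
  also have "\<dots> = 1" by (simp add: cis_multiple_2pi)
  finally have w1: "w ^ (2*\<tau>) = 1" .
  have "algebraic_int (w + inverse w)" by (rule alg_int_unit_root[OF w1]) (use tau in simp)
  moreover have "w + inverse w = C.sig / 2"
    unfolding sig2 w_def cis_inverse by (rule cis_pm)
  ultimately have "algebraic_int (C.sig / 2)" by simp
  then show ?thesis by (simp only: target)
qed

end
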